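(* If $r\ge 4$ then $\pi\ge\min\{2(n-q-2m),\,3(n-2q-m+1)\}$.
   Context: $G$ is a set of size $n$ and $G(\circ)$, $G(\ast)$ are distinct groups on $G$ with the same identity element. $\mathrm{diff}(\circ,\ast)=\{(a,b):a\circ b\ne a\ast b\}$, $\mathrm{dist}(\circ,\ast)=|\mathrm{diff}(\circ,\ast)|$, $\mathrm{dist}_a=|\{b:a\circ b\ne a\ast b\}|$; $H=\{a:\mathrm{dist}_a=0\}$, $h=|H|$; $K=\{a:\mathrm{dist}_a<n/3\}$, $k=|K|$; $m=\min\{\mathrm{dist}_a:\mathrm{dist}_a>0\}$. Standing assumption: $m\ge 3$. Let $q=\lceil n/3\rceil$ and the profit $\pi=\mathrm{dist}(\circ,\ast)-((k-h)m+(n-k)q)$. Let $R=\{(a,a)\in\mathrm{diff}(\circ,\ast):a\in K\}$, $r=|R|$. *)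

theory Defs
  imports Complex_Main "HOL-Algebra.Group"
begin

text \<open>Two binary operations f (written \<circ> in the paper) and g (written \<ast>) on a carrier G.\<close>

definition diff_set :: "'a set \<Rightarrow> ('a \<Rightarrow> 'a \<Rightarrow> 'a) \<Rightarrow> ('a \<Rightarrow> 'a \<Rightarrow> 'a) \<Rightarrow> ('a \<times> 'a) set" where
  "diff_set G f g = {(a, b). a \<in> G \<and> b \<in> G \<and> f a b \<noteq> g a b}"

definition dist_ops :: "'a set \<Rightarrow> ('a \<Rightarrow> 'a \<Rightarrow> 'a) \<Rightarrow> ('a \<Rightarrow> 'a \<Rightarrow> 'a) \<Rightarrow> nat" where
  "dist_ops G f g = card (diff_set G f g)"

definition dist_row :: "'a set \<Rightarrow> ('a \<Rightarrow> 'a \<Rightarrow> 'a) \<Rightarrow> ('a \<Rightarrow> 'a \<Rightarrow> 'a) \<Rightarrow> 'a \<Rightarrow> nat" where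
  "dist_row G f g a = card {b \<in> G. f a b \<noteq> g a b}"

definition H_set :: "'a set \<Rightarrow> ('a \<Rightarrow> 'a \<Rightarrow> 'a) \<Rightarrow> ('a \<Rightarrow> 'a \<Rightarrow> 'a) \<Rightarrow> 'a set" where
  "H_set G f g = {a \<in> G. dist_row G f g a = 0}"

definition K_set :: "'a set \<Rightarrow> ('a \<Rightarrow> 'a \<Rightarrow> 'a) \<Rightarrow> ('a \<Rightarrow> 'a \<Rightarrow> 'a) \<Rightarrow> 'a set" where
  "K_set G f g = {a \<in> G. real (dist_row G f g a) < real (card G) / 3}"

definition m_val :: "'a set \<Rightarrow> ('a \<Rightarrow> 'a \<Rightarrow> 'a) \<Rightarrow> ('a \<Rightarrow> 'a \<Rightarrow> 'a) \<Rightarrow> nat" where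
  "m_val G f g = Min {dist_row G f g a | a. a \<in> G \<and> dist_row G f g a > 0}"

definition q_val :: "'a set \<Rightarrow> nat" where
  "q_val G = nat \<lceil>real (card G) / 3\<rceil>"

definition profit :: "'a set \<Rightarrow> ('a \<Rightarrow> 'a \<Rightarrow> 'a) \<Rightarrow> ('a \<Rightarrow> 'a \<Rightarrow> 'a) \<Rightarrow> int" where
  "profit G f g = int (dist_ops G f g)
     - ((int (card (K_set G f g)) - int (card (H_set G f g))) * int (m_val G f g)
        + (int (card G) - int (card (K_set G f g))) * int (q_val G))"

definition R_set :: "'a set \<Rightarrow> ('a \<Rightarrow> 'a \<Rightarrow> 'a) \<Rightarrow> ('a \<Rightarrow> 'a \<Rightarrow> 'a) \<Rightarrow> ('a \<times> 'a) set" where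
  "R_set G f g = {(a, a) | a. a \<in> K_set G f g \<and> (a, a) \<in> diff_set G f g}"

end

theory Submission
  imports Defs
begin

lemma grp_facts:
  assumes "group \<lparr>carrier = G, mult = f, one = e\<rparr>"
  shows "\<forall>x\<in>G. \<forall>y\<in>G. f x y \<in> G"
    and "\<forall>x\<in>G. \<forall>y\<in>G. \<forall>z\<in>G. f (f x y) z = f x (f y z)"
    and "\<forall>x\<in>G. \<forall>y\<in>G. \<forall>z\<in>G. f x y = f x z \<longrightarrow> y = z"
    and "\<forall>x\<in>G. \<forall>y\<in>G. \<forall>z\<in>G. f y x = f z x \<longrightarrow> y = z"
    and "e \<in> G"
proof -
  interpret group "\<lparr>carrier = G, mult = f, one = e\<rparr>" by fact
  show "\<forall>x\<in>G. \<forall>y\<in>G. f x y \<in> G" using m_closed by fastforce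
  show "\<forall>x\<in>G. \<forall>y\<in>G. \<forall>z\<in>G. f (f x y) z = f x (f y z)" using m_assoc by fastforce
  show "\<forall>x\<in>G. \<forall>y\<in>G. \<forall>z\<in>G. f x y = f x z \<longrightarrow> y = z" using Units_l_cancel by (metis Units_eq partial_object.select_convs(1) monoid.select_convs(1))
  show "\<forall>x\<in>G. \<forall>y\<in>G. \<forall>z\<in>G. f y x = f z x \<longrightarrow> y = z" using right_cancel by fastforce
  show "e \<in> G" using one_closed by fastforce
qed

lemma key:
  assumes fin: "finite G"
    and gf: "group \<lparr>carrier = G, mult = f, one = e\<rparr>"
    and gg: "group \<lparr>carrier = G, mult = g, one = e\<rparr>"
    and a: "a \<in> G" and b: "b \<in> G" and ne: "f a b \<noteq> g a b"
  shows "card G \<le> dist_row G f g a + dist_row G f g b + dist_row G f g (f a b)"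
proof -
  note F = grp_facts[OF gf] and Gg = grp_facts[OF gg]
  define B where "B = {c\<in>G. f b c \<noteq> g b c}"
  define A' where "A' = {c\<in>G. f a (f b c) \<noteq> g a (f b c)}"
  define C where "C = {c\<in>G. f (f a b) c \<noteq> g (f a b) c}"
  have sub: "G \<subseteq> B \<union> A' \<union> C"
  proof
    fix c assume c: "c \<in> G"
    show "c \<in> B \<union> A' \<union> C"
    proof (rule ccontr)
      assume "c \<notin> B \<union> A' \<union> C"
      hence h1: "f b c = g b c" and h2: "f a (f b c) = g a (f b c)"
        and h3: "f (f a b) c = g (f a b) c" using c unfolding B_def A'_def C_def by auto
      have fab: "f a b \<in> G" using F(1) a b by auto
      have gab: "g a b \<in> G" using Gg(1) a b by auto
      have "g (g a b) c = g a (g b c)" using Gg(2) a b c by auto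
      also have "\<dots> = f a (f b c)" using h1 h2 by simp
      also have "\<dots> = f (f a b) c" using F(2) a b c by auto
      also have "\<dots> = g (f a b) c" using h3 .
      finally have "g a b = f a b" using Gg(4) c fab gab by blast
      with ne show False by simp
    qed
  qed
  have "card G \<le> card (B \<union> A' \<union> C)" using card_mono[OF _ sub] fin
    unfolding B_def A'_def C_def by auto
  also have "\<dots> \<le> card B + card A' + card C"
    by (meson add_le_mono1 card_Un_le le_trans)
  also have "card A' \<le> dist_row G f g a"
  proof -
    have inj: "inj_on (f b) A'" using F(3) b unfolding A'_def inj_on_def by auto
    have "f b ` A' \<subseteq> {y\<in>G. f a y \<noteq> g a y}" using F(1) b unfolding A'_def by auto
    hence "card (f b ` A') \<le> card {y\<in>G. f a y \<noteq> g a y}" using fin by (intro card_mono) auto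
    thus ?thesis using card_image[OF inj] unfolding dist_row_def by simp
  qed
  finally show ?thesis unfolding dist_row_def B_def C_def by linarith
qed

lemma dist_row_sym: "dist_row G g f x = dist_row G f g x"
  unfolding dist_row_def by metis

theorem lemma9p2:
  fixes G :: "'a set" and f g :: "'a \<Rightarrow> 'a \<Rightarrow> 'a" and e :: 'a
  assumes "finite G"
    and "group \<lparr>carrier = G, mult = f, one = e\<rparr>"
    and "group \<lparr>carrier = G, mult = g, one = e\<rparr>"
    and "\<exists>a\<in>G. \<exists>b\<in>G. f a b \<noteq> g a b"
    and "m_val G f g \<ge> 3"
    and "card (R_set G f g) \<ge> 4"
  shows "profit G f g \<ge>
    min (2 * (int (card G) - int (q_val G) - 2 * int (m_val G f g)))
        (3 * (int (card G) - 2 * int (q_val G) - int (m_val G f g) + 1))"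
proof -
  note fin = assms(1) and gf = assms(2) and gg = assms(3)
  note F = grp_facts[OF gf] and Gg = grp_facts[OF gg]
  define n where "n = card G"
  define D where "D = dist_row G f g"
  define K where "K = K_set G f g"
  define H where "H = H_set G f g"
  define m where "m = m_val G f g"
  define q where "q = q_val G"
  have npos: "n > 0" using F(5) fin n_def card_gt_0_iff by blast
  have Kdef: "\<And>a. a \<in> K \<longleftrightarrow> a \<in> G \<and> real (D a) < real n / 3"
    unfolding K_def K_set_def D_def n_def by auto
  have Hdef: "\<And>a. a \<in> H \<longleftrightarrow> a \<in> G \<and> D a = 0"
    unfolding H_def H_set_def D_def by auto
  have HK: "H \<subseteq> K" using Hdef Kdef npos by auto
  have KG: "K \<subseteq> G" using Kdef by auto
  have finK: "finite K" using KG fin finite_subset by blast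
  define w where "w = (\<lambda>a. if a \<in> H then 0 else if a \<in> K then int m else int q)"
  define c where "c = (\<lambda>a. int (D a) - w a)"
  have dsum: "dist_ops G f g = (\<Sum>a\<in>G. D a)"
  proof -
    have "diff_set G f g = Sigma G (\<lambda>a. {b\<in>G. f a b \<noteq> g a b})"
      unfolding diff_set_def by auto
    thus ?thesis unfolding dist_ops_def D_def dist_row_def
      using card_SigmaI[of G "\<lambda>a. {b\<in>G. f a b \<noteq> g a b}"] fin by simp
  qed
  have wsum: "(\<Sum>a\<in>G. w a) = (int (card K) - int (card H)) * int m + (int n - int (card K)) * int q"
  proof -
    have "(\<Sum>a\<in>G. w a) = (\<Sum>a\<in>G - K. w a) + (\<Sum>a\<in>K. w a)"
      using sum.subset_diff[OF KG fin] by simp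
    also have "(\<Sum>a\<in>K. w a) = (\<Sum>a\<in>K - H. w a) + (\<Sum>a\<in>H. w a)"
      using sum.subset_diff[OF HK finK] by simp
    also have "(\<Sum>a\<in>H. w a) = 0" unfolding w_def by simp
    also have "(\<Sum>a\<in>K - H. w a) = int (card (K - H)) * int m" unfolding w_def by simp
    also have "(\<Sum>a\<in>G - K. w a) = int (card (G - K)) * int q"
    proof -
      have "(\<Sum>a\<in>G - K. w a) = (\<Sum>a\<in>G - K. int q)" unfolding w_def using HK by (intro sum.cong) auto
      thus ?thesis by simp
    qed
    also have "card (K - H) = card K - card H" using card_Diff_subset[OF _ HK] finK HK
      by (meson finite_subset)
    also have "card (G - K) = n - card K" using card_Diff_subset[OF finK KG] n_def by simp
    finally show ?thesis
      using card_mono[OF finK HK] card_mono[OF fin KG] n_def by (simp add: of_nat_diff)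
  qed
  have prof: "profit G f g = (\<Sum>a\<in>G. c a)"
    unfolding profit_def c_def sum_subtractf using dsum wsum
    unfolding D_def n_def K_def H_def m_def q_def by simp
  have mle: "\<And>a. a \<in> G \<Longrightarrow> D a > 0 \<Longrightarrow> m \<le> D a"
  proof -
    fix a assume "a \<in> G" "D a > 0"
    hence "D a \<in> {dist_row G f g a | a. a \<in> G \<and> dist_row G f g a > 0}" unfolding D_def by auto
    moreover have "finite {dist_row G f g a | a. a \<in> G \<and> dist_row G f g a > 0}"
      using fin by simp
    ultimately show "m \<le> D a" unfolding m_def m_val_def by (simp add: Min_le)
  qed
  have qle: "\<And>a. a \<in> G \<Longrightarrow> a \<notin> K \<Longrightarrow> q \<le> D a"
  proof -
    fix a assume "a \<in> G" "a \<notin> K"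
    hence "real n / 3 \<le> real (D a)" using Kdef by force
    hence "\<lceil>real n / 3\<rceil> \<le> int (D a)" by (simp add: ceiling_le)
    hence "nat \<lceil>real n / 3\<rceil> \<le> nat (int (D a))" by (rule nat_mono)
    thus "q \<le> D a" unfolding q_def q_val_def n_def by simp
  qed
  have cnn: "\<And>a. a \<in> G \<Longrightarrow> 0 \<le> c a"
    unfolding c_def w_def using Hdef mle qle by auto
  define S where "S = {a. a \<in> K \<and> (a, a) \<in> diff_set G f g}"
  have RS: "R_set G f g = (\<lambda>a. (a, a)) ` S" unfolding R_set_def S_def K_def by auto
  have cS: "card S \<ge> 4" using assms(6) unfolding RS
    by (subst (asm) card_image) (auto simp: inj_on_def)
  have finS: "finite S" using finK unfolding S_def by auto
  have Sne: "S \<noteq> {}" using cS by auto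
  have "Min (D ` S) \<in> D ` S" using finS Sne by (intro Min_in) auto
  then obtain a1 where a1S: "a1 \<in> S" and a1min: "D a1 = Min (D ` S)" by auto
  have a1le: "\<And>a. a \<in> S \<Longrightarrow> D a1 \<le> D a" using a1min finS by simp
  have a1G: "a1 \<in> G" and a1K: "a1 \<in> K" and a1d: "f a1 a1 \<noteq> g a1 a1"
    using a1S KG unfolding S_def diff_set_def by auto
  have Dpos: "\<And>a. a \<in> S \<Longrightarrow> D a > 0"
  proof -
    fix a assume a: "a \<in> S"
    hence "a \<in> G" "a \<in> {b \<in> G. f a b \<noteq> g a b}" unfolding S_def diff_set_def by auto
    hence "{b \<in> G. f a b \<noteq> g a b} \<noteq> {}" by auto
    moreover have "finite {b \<in> G. f a b \<noteq> g a b}" using fin by simp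
    ultimately show "D a > 0" unfolding D_def dist_row_def using card_gt_0_iff by blast
  qed
  have a1m: "m \<le> D a1" using mle a1G Dpos a1S by auto
  define s where "s = f a1 a1"
  define t where "t = g a1 a1"
  have st: "s \<noteq> t" using a1d s_def t_def by simp
  have sG: "s \<in> G" using F(1) a1G s_def by auto
  have tG: "t \<in> G" using Gg(1) a1G t_def by auto
  have Ds: "n \<le> 2 * D a1 + D s"
    using key[OF fin gf gg a1G a1G a1d] unfolding D_def n_def s_def by simp
  have Dt: "n \<le> 2 * D a1 + D t"
  proof -
    have "card G \<le> dist_row G g f a1 + dist_row G g f a1 + dist_row G g f (g a1 a1)"
      using key[OF fin gg gf a1G a1G] a1d by simp
    thus ?thesis unfolding D_def n_def t_def dist_row_sym[of G g f] by simp
  qed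
  have a1small: "real (D a1) < real n / 3" using Kdef a1K by auto
  have sK: "s \<notin> K"
  proof
    assume "s \<in> K"
    hence "real (D s) < real n / 3" using Kdef by blast
    moreover have "real n \<le> 2 * real (D a1) + real (D s)" using Ds by linarith
    ultimately show False using a1small by linarith
  qed
  have tK: "t \<notin> K"
  proof
    assume "t \<in> K"
    hence "real (D t) < real n / 3" using Kdef by blast
    moreover have "real n \<le> 2 * real (D a1) + real (D t)" using Dt by linarith
    ultimately show False using a1small by linarith
  qed
  have sS: "s \<notin> S" and tS: "t \<notin> S" using sK tK unfolding S_def by auto
  have cs: "c s = int (D s) - int q" unfolding c_def w_def using sK HK by auto
  have ct: "c t = int (D t) - int q" unfolding c_def w_def using tK HK by auto
  have SG: "S \<subseteq> G" using KG unfolding S_def by auto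
  have "(\<Sum>a\<in>S \<union> {s, t}. c a) \<le> (\<Sum>a\<in>G. c a)"
    using SG sG tG cnn fin by (intro sum_mono2) auto
  moreover have "(\<Sum>a\<in>S \<union> {s, t}. c a) = (\<Sum>a\<in>S. c a) + c s + c t"
    using finS sS tS st by (simp add: sum.union_disjoint)
  moreover have "(\<Sum>a\<in>S. c a) \<ge> (\<Sum>a\<in>S. int (D a1) - int m)"
  proof (rule sum_mono)
    fix a assume a: "a \<in> S"
    hence "a \<in> K" "a \<notin> H" using Dpos Hdef unfolding S_def by auto
    thus "int (D a1) - int m \<le> c a" unfolding c_def w_def using a1le[OF a] by auto
  qed
  moreover have "(\<Sum>a\<in>S. int (D a1) - int m) \<ge> 4 * (int (D a1) - int m)"
  proof -
    have "(\<Sum>a\<in>S. int (D a1) - int m) = int (card S) * (int (D a1) - int m)" by simp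
    moreover have "int (card S) \<ge> 4" using cS by simp
    moreover have "int (D a1) - int m \<ge> 0" using a1m by simp
    ultimately show ?thesis by (metis mult_right_mono)
  qed
  ultimately have outer: "(\<Sum>a\<in>G. c a) \<ge> (\<Sum>a\<in>S. c a) + c s + c t \<and> (\<Sum>a\<in>S. c a) \<ge> 4 * (int (D a1) - int m)"
    by linarith
  have "profit G f g \<ge> 2 * (int n - int q - 2 * int m)"
  proof -
    have "int n \<le> 2 * int (D a1) + int (D s)" using Ds by linarith
    moreover have "int n \<le> 2 * int (D a1) + int (D t)" using Dt by linarith
    ultimately show ?thesis using outer[THEN conjunct1] outer[THEN conjunct2] prof cs ct by (smt (verit))
  qed
  thus ?thesis unfolding n_def q_def m_def by linarith
qed

end
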